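(* Let $A_1,A_2,A_3$ be $m\times m$ complex positive semidefinite matrices. Then $$\det(A_1+A_2+A_3)+\det A_1+\det A_2+\det A_3\;\ge\;\det(A_1+A_2)+\det(A_1+A_3)+\det(A_2+A_3).$$ *)

theory Defs
  imports "HOL-Analysis.Analysis" "HOL-Library.Complex_Order"
begin

definition conj_transpose :: "complex ^'n ^'m \<Rightarrow> complex ^'m ^'n" where
  "conj_transpose A = (\<chi> i j. cnj (A $ j $ i))"

definition hermitian_mat :: "complex ^'n ^'n \<Rightarrow> bool" where
  "hermitian_mat A \<longleftrightarrow> conj_transpose A = A"

text \<open>Positive semidefinite: Hermitian and x^* A x is real and nonnegative for all x
  (order on complex from Complex_Order: z \<ge> 0 iff z is real and Re z \<ge> 0).\<close>
definition psd_mat :: "complex ^'n ^'n \<Rightarrow> bool" where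
  "psd_mat A \<longleftrightarrow> hermitian_mat A \<and>
     (\<forall>x :: complex ^'n. (\<Sum>i\<in>UNIV. \<Sum>j\<in>UNIV. cnj (x $ i) * A $ i $ j * x $ j) \<ge> 0)"

end

theory Submission
  imports Defs
begin


definition outer :: "complex^'m \<Rightarrow> complex^'m^'m" where
  "outer v = (\<chi> i j. v$i * cnj (v$j))"

definition qf :: "complex^'m^'m \<Rightarrow> complex^'m \<Rightarrow> complex" where
  "qf A x = (\<Sum>i\<in>UNIV. \<Sum>j\<in>UNIV. cnj (x $ i) * A $ i $ j * x $ j)"

lemma det_sum_rows_gen:
  fixes a :: "'m::finite \<Rightarrow> 'k \<Rightarrow> complex^'m"
  assumes "finite S"
  shows "det (\<chi> i. \<Sum>k\<in>S. a i k) = (\<Sum>f\<in>PiE UNIV (\<lambda>_. S). det (\<chi> i. a i (f i)))"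
proof -
  have "det (\<chi> i. \<Sum>k\<in>S. a i k) = (\<Sum>p\<in>{p. p permutes (UNIV::'m set)}.
      of_int (sign p) * (\<Prod>i\<in>UNIV. \<Sum>k\<in>S. a i k $ p i))"
    unfolding det_def by simp
  also have "\<dots> = (\<Sum>p\<in>{p. p permutes (UNIV::'m set)}.
      of_int (sign p) * (\<Sum>f\<in>PiE UNIV (\<lambda>_. S). \<Prod>i\<in>UNIV. a i (f i) $ p i))"
    by (simp add: prod_sum_PiE assms)
  also have "\<dots> = (\<Sum>f\<in>PiE UNIV (\<lambda>_. S). \<Sum>p\<in>{p. p permutes (UNIV::'m set)}.
      of_int (sign p) * (\<Prod>i\<in>UNIV. a i (f i) $ p i))"
    by (simp add: sum_distrib_left sum.swap[where A="{p. p permutes (UNIV::'m set)}"])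
  also have "\<dots> = (\<Sum>f\<in>PiE UNIV (\<lambda>_. S). det (\<chi> i. a i (f i)))"
    unfolding det_def by simp
  finally show ?thesis .
qed

definition hh :: "('k \<Rightarrow> complex^'m) \<Rightarrow> ('m::finite \<Rightarrow> 'k) \<Rightarrow> complex" where
  "hh w f = (\<Prod>i\<in>UNIV. w (f i) $ i) * det (\<chi> i j. cnj (w (f i) $ j))"

lemma det_outer_sum:
  assumes "finite S"
  shows "det (\<Sum>k\<in>S. outer (w k) :: complex^'m::finite^'m) = (\<Sum>f\<in>PiE UNIV (\<lambda>_. S). hh w f)"
proof -
  have "(\<Sum>k\<in>S. outer (w k) :: complex^'m::finite^'m) = (\<chi> i. \<Sum>k\<in>S. outer (w k) $ i)"
    by (simp add: vec_eq_iff)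
  hence "det (\<Sum>k\<in>S. outer (w k) :: complex^'m::finite^'m) = (\<Sum>f\<in>PiE UNIV (\<lambda>_. S). det (\<chi> i. outer (w (f i)) $ i))"
    using det_sum_rows_gen[OF assms, of "\<lambda>i k. outer (w k) $ i"] by simp
  also have "\<dots> = (\<Sum>f\<in>PiE UNIV (\<lambda>_. S). hh w f)"
  proof (rule sum.cong[OF refl])
    fix f :: "'m \<Rightarrow> _"
    have "(\<chi> i. outer (w (f i)) $ i) = (\<chi> i. (w (f i) $ i) *s (\<chi> j. cnj (w (f i) $ j)))"
      by (simp add: vec_eq_iff outer_def)
    thus "det (\<chi> i. outer (w (f i)) $ i) = hh w f"
      unfolding hh_def by (simp add: det_rows_mul)
  qed
  finally show ?thesis .
qed

lemma hh_noninj: "\<not> inj f \<Longrightarrow> hh w f = 0"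
proof -
  assume "\<not> inj f"
  then obtain i j where "i \<noteq> j" "f i = f j" unfolding inj_def by blast
  hence "det (\<chi> i j. cnj (w (f i) $ j)) = 0"
    by (intro det_identical_rows[of i j]) (auto simp: row_def vec_eq_iff)
  thus ?thesis by (simp add: hh_def)
qed

lemma det_cnj: "det (\<chi> i j. cnj (M $ i $ j)) = cnj (det (M::complex^'m::finite^'m))"
  unfolding det_def by (simp add: cnj_sum cnj_prod)

lemma sum_bij_group_nonneg:
  fixes w :: "'k \<Rightarrow> complex^'m::finite"
  assumes g: "bij_betw g (UNIV::'m set) U" and UK: "U \<subseteq> K"
  shows "(\<Sum>f\<in>{f\<in>PiE (UNIV::'m set) (\<lambda>_. K). range f = U}. hh w f) \<ge> 0"
proof -
  let ?P = "{p. p permutes (UNIV::'m set)}"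
  have ig: "inj g" and rg: "range g = U" using g by (auto simp: bij_betw_def)
  have "(\<Sum>f\<in>{f\<in>PiE (UNIV::'m set) (\<lambda>_. K). range f = U}. hh w f) = (\<Sum>p\<in>?P. hh w (g \<circ> p))"
  proof (rule sym, rule sum.reindex_bij_witness[where i="\<lambda>f. inv_into UNIV g \<circ> f" and j="\<lambda>p. g \<circ> p"])
    fix p assume "p \<in> ?P"
    hence p: "p permutes UNIV" by simp
    show "inv_into UNIV g \<circ> (g \<circ> p) = p" using ig by (auto simp: fun_eq_iff)
    have "range (g \<circ> p) = g ` (p ` UNIV)" by (simp add: image_comp)
    also have "\<dots> = U" using p rg by (simp add: permutes_image)
    finally have "range (g \<circ> p) = U" .
    thus "g \<circ> p \<in> {f\<in>PiE (UNIV::'m set) (\<lambda>_. K). range f = U}" using UK by auto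
  next
    fix f assume f: "f \<in> {f\<in>PiE (UNIV::'m set) (\<lambda>_. K). range f = U}"
    hence rf: "range f = U" by simp
    show "g \<circ> (inv_into UNIV g \<circ> f) = f" using rf rg by (auto simp: fun_eq_iff f_inv_into_f)
    have "card (range f) = CARD('m)" using rf g by (simp add: bij_betw_same_card)
    hence "inj f" using inj_on_iff_eq_card[of "UNIV::'m set" f] by simp
    hence "bij_betw f UNIV U" using rf by (simp add: bij_betw_def)
    moreover have "bij_betw (inv_into UNIV g) U UNIV" using g by (simp add: bij_betw_inv_into)
    ultimately have "bij (inv_into UNIV g \<circ> f)" by (rule bij_betw_trans)
    thus "inv_into UNIV g \<circ> f \<in> ?P" by (auto intro: bij_imp_permutes)
  qed (rule refl)
  also have "\<dots> = (\<Sum>p\<in>?P. of_int (sign p) * (\<Prod>i\<in>UNIV. (\<chi> i j. w (g j) $ i) $ i $ p i)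
      * det (\<chi> i j. cnj (w (g i) $ j)))"
  proof (rule sum.cong[OF refl])
    fix p assume "p \<in> ?P"
    hence p: "p permutes UNIV" by simp
    have "det (\<chi> i j. cnj (w (g (p i)) $ j)) = det (\<chi> i. (\<chi> i j. cnj (w (g i) $ j)) $ p i)"
      by simp
    also have "\<dots> = of_int (sign p) * det (\<chi> i j. cnj (w (g i) $ j))"
      by (rule det_permute_rows[OF p])
    finally show "hh w (g \<circ> p) = of_int (sign p) * (\<Prod>i\<in>UNIV. (\<chi> i j. w (g j) $ i) $ i $ p i)
      * det (\<chi> i j. cnj (w (g i) $ j))"
      unfolding hh_def by simp
  qed
  also have "\<dots> = det (\<chi> i j. w (g j) $ i) * det (\<chi> i j. cnj (w (g i) $ j))"
    unfolding det_def[of "\<chi> i j. w (g j) $ i"] by (simp add: sum_distrib_right)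
  also have "\<dots> = det (\<chi> i j. w (g i) $ j) * cnj (det (\<chi> i j. w (g i) $ j))"
  proof -
    have "(\<chi> i j. w (g j) $ i) = transpose (\<chi> i j. w (g i) $ j)"
      by (simp add: transpose_def)
    moreover have "det (\<chi> i j. cnj (w (g i) $ j)) = cnj (det (\<chi> i j. w (g i) $ j))"
      using det_cnj[of "\<chi> i j. w (g i) $ j"] by simp
    ultimately show ?thesis by simp
  qed
  also have "\<dots> \<ge> 0"
    by (simp add: complex_mult_cnj less_eq_complex_def)
  finally show ?thesis by simp
qed



lemma herm_entry: "hermitian_mat A \<Longrightarrow> cnj (A$i$j) = A$j$i"
  unfolding hermitian_mat_def conj_transpose_def
  by (metis vec_lambda_beta)
lemma sum_if_const: "(\<Sum>b\<in>S. if P then f b else (0::complex)) = (if P then sum f S else 0)"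
  by simp
lemma qf_axis:
  assumes "hermitian_mat A"
  shows "qf A (x + axis i t) = qf A x + t * cnj (\<Sum>k\<in>UNIV. A$i$k * x$k)
          + cnj t * (\<Sum>k\<in>UNIV. A$i$k * x$k) + cnj t * t * A$i$i"
proof -
  have e: "cnj ((x + axis i t) $ a) * A $ a $ b * (x + axis i t) $ b =
     cnj (x$a) * A$a$b * x$b + (if b = i then cnj (x$a) * A$a$b * t else 0)
     + (if a = i then cnj t * A$a$b * x$b else 0)
     + (if a = i then (if b = i then cnj t * A$a$b * t else 0) else 0)" for a b
    by (cases "a = i"; cases "b = i") (simp_all add: axis_def algebra_simps)
  have c: "(\<Sum>a\<in>UNIV. cnj (x$a) * A$a$i) = cnj (\<Sum>k\<in>UNIV. A$i$k * x$k)"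
    by (simp add: cnj_sum herm_entry[OF assms] mult.commute)
  have 1: "(\<Sum>a\<in>UNIV. \<Sum>b\<in>UNIV. if b = i then cnj (x$a) * A$a$b * t else 0)
      = t * cnj (\<Sum>k\<in>UNIV. A$i$k * x$k)"
    unfolding c[symmetric] by (simp add: sum_distrib_left sum_distrib_right mult.commute)
  have 2: "(\<Sum>a\<in>UNIV. \<Sum>b\<in>UNIV. if a = i then cnj t * A$a$b * x$b else 0)
      = cnj t * (\<Sum>k\<in>UNIV. A$i$k * x$k)"
    unfolding sum_if_const by (simp add: sum_distrib_left mult.assoc)
  have 3: "(\<Sum>a\<in>UNIV. \<Sum>b\<in>UNIV. if a = i then (if b = i then cnj t * A$a$b * t else 0) else 0)
      = cnj t * t * A$i$i"
    unfolding sum_if_const by simp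
  show ?thesis
    unfolding qf_def e sum.distrib 1 2 3 by simp
qed

lemma mult_if_r: "(a::complex) * (if P then b else c) = (if P then a * b else a * c)" by simp
lemma mult_if_l: "(if P then b else c) * (a::complex) = (if P then b * a else c * a)" by simp
lemma cnj_if: "cnj (if P then b else c) = (if P then cnj b else cnj c)" by simp

lemma psd_iff: "psd_mat A \<longleftrightarrow> hermitian_mat A \<and> (\<forall>x. qf A x \<ge> 0)"
  by (simp add: psd_mat_def qf_def)

lemma qf_axis1: "qf A (axis i 1) = A$i$i"
  by (simp add: qf_def axis_def mult_if_r mult_if_l cnj_if cong: if_cong)

lemma psd_diag: "psd_mat A \<Longrightarrow> A$i$i \<ge> 0"
  using qf_axis1[of A i] unfolding psd_iff by metis

lemma psd_row_zero:
  assumes psd: "psd_mat A" and z: "A$i$i = 0"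
  shows "A$i$k = 0"
proof (rule ccontr)
  assume nz: "A$i$k \<noteq> 0"
  let ?s = "A$i$k"
  let ?x = "axis k (1::complex) :: complex^'a"
  have herm: "hermitian_mat A" using psd by (simp add: psd_mat_def)
  have s: "(\<Sum>l\<in>UNIV. A$i$l * ?x$l) = ?s" by (simp add: axis_def mult_if_r cong: if_cong)
  define q where "q = Re (qf A ?x)"
  have pos: "cmod ?s ^ 2 > 0" using nz by simp
  define r where "r = (\<bar>q\<bar> + 1) / (2 * cmod ?s ^ 2)"
  have r2: "2 * r * cmod ?s ^ 2 = \<bar>q\<bar> + 1" using pos by (simp add: r_def)
  let ?t = "- (of_real r * ?s)"
  have "qf A (?x + axis i ?t) \<ge> 0" using psd unfolding psd_iff by blast
  hence "Re (qf A (?x + axis i ?t)) \<ge> 0" by (simp add: less_eq_complex_def)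
  moreover have "qf A (?x + axis i ?t) = qf A ?x - of_real (2 * r) * (?s * cnj ?s)"
    unfolding qf_axis[OF herm] s z by (simp add: algebra_simps)
  moreover have "Re (of_real (2 * r) * (?s * cnj ?s)) = 2 * r * cmod ?s ^ 2"
    by (simp add: complex_mult_cnj cmod_def)
  ultimately have "q - (\<bar>q\<bar> + 1) \<ge> 0" using r2 unfolding q_def by simp
  thus False by linarith
qed

lemma qf_diff: "qf (A - B) x = qf A x - qf B x"
  by (simp add: qf_def algebra_simps sum_subtractf)



lemma psd_decomp:
  fixes A :: "complex^'m::finite^'m"
  shows "psd_mat A \<Longrightarrow> \<exists>(n::nat) vs. A = (\<Sum>k<n. outer (vs k))"
proof (induction "card {i. A$i$i \<noteq> 0}" arbitrary: A rule: less_induct)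
  case less
  have herm: "hermitian_mat A" using less.prems by (simp add: psd_mat_def)
  show ?case
  proof (cases "\<forall>i. A$i$i = 0")
    case True
    then have "A = 0" using psd_row_zero[OF less.prems] by (simp add: vec_eq_iff)
    then have "A = (\<Sum>k<(0::nat). outer ((\<lambda>_. 0) k))" by simp
    then show ?thesis by (intro exI[of _ "0::nat"] exI[of _ "\<lambda>_::nat. 0"]) simp
  next
    case False
    then obtain i where nz: "A$i$i \<noteq> 0" by blast
    have ge: "A$i$i \<ge> 0" using psd_diag[OF less.prems] .
    define d where "d = Re (A$i$i)"
    have Aii: "A$i$i = of_real d" using ge by (simp add: d_def less_eq_complex_def complex_eq_iff)
    have dpos: "d > 0" using ge nz Aii by (auto simp: less_eq_complex_def)
    have sq: "of_real (sqrt d) * of_real (sqrt d) = (of_real d :: complex)"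
      using dpos by (simp flip: of_real_mult)
    define v where "v = (\<chi> j. A$j$i / of_real (sqrt d))"
    define A' where "A' = A - outer v"
    have ov: "outer v $ j $ k = A$j$i * A$i$k / of_real d" for j k
      using sq by (simp add: outer_def v_def herm_entry[OF herm])
    have A'e: "A' $ j $ k = A$j$k - A$j$i * A$i$k / of_real d" for j k
      by (simp add: A'_def ov)
    have hA': "hermitian_mat A'"
      unfolding hermitian_mat_def conj_transpose_def
      by (simp add: vec_eq_iff A'e herm_entry[OF herm] mult.commute)
    have qA': "qf A' x \<ge> 0" for x
    proof -
      define s where "s = (\<Sum>k\<in>UNIV. A$i$k * x$k)"
      have c: "(\<Sum>a\<in>UNIV. cnj (x$a) * A$a$i) = cnj s"
        by (simp add: s_def cnj_sum herm_entry[OF herm] mult.commute)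
      have "qf (outer v) x = (\<Sum>a\<in>UNIV. \<Sum>b\<in>UNIV. (cnj (x$a) * A$a$i) * (A$i$b * x$b) / of_real d)"
        unfolding qf_def ov by (simp add: algebra_simps)
      also have "\<dots> = (\<Sum>a\<in>UNIV. cnj (x$a) * A$a$i) * (\<Sum>b\<in>UNIV. A$i$b * x$b) / of_real d"
        by (simp add: sum_product sum_divide_distrib)
      finally have qo: "qf (outer v) x = cnj s * s / of_real d" unfolding c s_def .
      have "qf A (x + axis i (- s / of_real d)) \<ge> 0" using less.prems unfolding psd_iff by blast
      moreover have "qf A (x + axis i (- s / of_real d)) = qf A x - cnj s * s / of_real d"
        unfolding qf_axis[OF herm] s_def[symmetric] Aii using dpos
        by (simp add: field_simps power2_eq_square)
      ultimately show ?thesis unfolding A'_def qf_diff qo by simp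
    qed
    have psdA': "psd_mat A'" using hA' qA' by (simp add: psd_iff)
    have sub: "{j. A'$j$j \<noteq> 0} \<subseteq> {j. A$j$j \<noteq> 0} - {i}"
    proof
      fix j assume j: "j \<in> {j. A'$j$j \<noteq> 0}"
      have "j \<noteq> i"
      proof
        assume "j = i"
        hence "A'$j$j = of_real d - of_real d * of_real d / of_real d" using A'e Aii by simp
        also have "\<dots> = 0" using dpos by simp
        finally show False using j by simp
      qed
      moreover have "A$j$j \<noteq> 0"
      proof
        assume "A$j$j = 0"
        hence "A$j$i = 0" using psd_row_zero[OF less.prems] by blast
        hence "A'$j$j = 0" using A'e \<open>A$j$j = 0\<close> by simp
        thus False using j by simp
      qed
      ultimately show "j \<in> {j. A$j$j \<noteq> 0} - {i}" by simp
    qed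
    have "card {j. A'$j$j \<noteq> 0} < card {i. A$i$i \<noteq> 0}"
      by (rule psubset_card_mono) (use sub nz in auto)
    then obtain n :: nat and vs where IH: "A' = (\<Sum>k<n. outer (vs k))" using less.hyps[OF _ psdA'] by blast
    have "A = A' + outer v" by (simp add: A'_def)
    also have "\<dots> = (\<Sum>k<Suc n. outer ((vs(n := v)) k))"
      unfolding IH by simp
    finally show ?thesis by blast
  qed
qed



lemma sum_group_nonneg:
  fixes w :: "'k \<Rightarrow> complex^'m::finite"
  assumes UK: "U \<subseteq> K"
  shows "(\<Sum>f\<in>{f\<in>PiE (UNIV::'m set) (\<lambda>_. K). range f = U}. hh w f) \<ge> 0"
proof (cases "\<exists>g. bij_betw g (UNIV::'m set) U")
  case True
  then obtain g where "bij_betw g (UNIV::'m set) U" by blast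
  thus ?thesis using sum_bij_group_nonneg UK by blast
next
  case False
  have "hh w f = 0" if "f \<in> {f\<in>PiE (UNIV::'m set) (\<lambda>_. K). range f = U}" for f
  proof -
    have "\<not> inj f" using False that by (auto simp: bij_betw_def)
    thus ?thesis by (rule hh_noninj)
  qed
  thus ?thesis by simp
qed


lemma c_nonneg:
  fixes U :: "(nat \<times> nat) set"
  assumes U3: "\<forall>p\<in>U. fst p \<in> {0,1,2}" and ne: "U \<noteq> {}"
  shows "(if \<forall>p\<in>U. fst p \<in> {0,1,2} then 1 else 0) + (if \<forall>p\<in>U. fst p \<in> {0} then 1 else 0)
    + (if \<forall>p\<in>U. fst p \<in> {1} then 1 else 0) + (if \<forall>p\<in>U. fst p \<in> {2} then 1 else 0)
    - (if \<forall>p\<in>U. fst p \<in> {0,1} then 1 else 0) - (if \<forall>p\<in>U. fst p \<in> {0,2} then 1 else 0)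
    - (if \<forall>p\<in>U. fst p \<in> {1,2} then 1 else (0::complex)) \<ge> 0"
proof -
  define a0 where "a0 = (\<exists>p\<in>U. fst p = 0)"
  define a1 where "a1 = (\<exists>p\<in>U. fst p = 1)"
  define a2 where "a2 = (\<exists>p\<in>U. fst p = 2)"
  have e0: "(\<forall>p\<in>U. fst p \<in> {0}) \<longleftrightarrow> \<not> a1 \<and> \<not> a2" using U3 unfolding a1_def a2_def by force
  have e1: "(\<forall>p\<in>U. fst p \<in> {1}) \<longleftrightarrow> \<not> a0 \<and> \<not> a2" using U3 unfolding a0_def a2_def by force
  have e2: "(\<forall>p\<in>U. fst p \<in> {2}) \<longleftrightarrow> \<not> a0 \<and> \<not> a1" using U3 unfolding a0_def a1_def by force
  have e01: "(\<forall>p\<in>U. fst p \<in> {0,1}) \<longleftrightarrow> \<not> a2" using U3 unfolding a2_def by force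
  have e02: "(\<forall>p\<in>U. fst p \<in> {0,2}) \<longleftrightarrow> \<not> a1" using U3 unfolding a1_def by force
  have e12: "(\<forall>p\<in>U. fst p \<in> {1,2}) \<longleftrightarrow> \<not> a0" using U3 unfolding a0_def by force
  have some: "a0 \<or> a1 \<or> a2" using U3 ne unfolding a0_def a1_def a2_def by force
  show ?thesis unfolding e0 e1 e2 e01 e02 e12 using U3 some
    by (cases a0; cases a1; cases a2) (simp_all add: less_eq_complex_def)
qed

theorem corollary3p2:
  fixes A1 A2 A3 :: "complex ^'m ^'m"
  assumes "psd_mat A1" and "psd_mat A2" and "psd_mat A3"
  shows "det (A1 + A2 + A3) + det A1 + det A2 + det A3
           \<ge> det (A1 + A2) + det (A1 + A3) + det (A2 + A3)"
proof -
  obtain n1 :: nat and v1 where d1: "A1 = (\<Sum>k<n1. outer (v1 k))" using psd_decomp[OF assms(1)] by blast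
  obtain n2 :: nat and v2 where d2: "A2 = (\<Sum>k<n2. outer (v2 k))" using psd_decomp[OF assms(2)] by blast
  obtain n3 :: nat and v3 where d3: "A3 = (\<Sum>k<n3. outer (v3 k))" using psd_decomp[OF assms(3)] by blast
  define N where "N j = (if j = (0::nat) then n1 else if j = 1 then n2 else n3)" for j
  define w where "w = (\<lambda>(j::nat, k::nat). if j = 0 then v1 k else if j = 1 then v2 k else v3 k)"
  define KK where "KK T = (SIGMA j:T. {..<N j})" for T
  define K where "K = KK {0,1,2}"
  define P where "P = PiE (UNIV::'m set) (\<lambda>_. K)"
  have finK: "finite K" by (simp add: K_def KK_def)
  have finP: "finite P" unfolding P_def using finK by (simp add: finite_PiE)
  have sT: "(\<Sum>j\<in>T. \<Sum>k<N j. outer (w (j,k))) = (\<Sum>p\<in>KK T. outer (w p))" if "finite T" for T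
    unfolding KK_def using that by (simp add: sum.Sigma split_def)
  have FT: "det (\<Sum>p\<in>KK T. outer (w p)) = (\<Sum>f\<in>P. if range f \<subseteq> KK T then hh w f else 0)"
    if "T \<subseteq> {0,1,2}" for T
  proof -
    have "finite T" using that finite_subset by blast
    hence fin: "finite (KK T)" by (simp add: KK_def)
    have sub: "KK T \<subseteq> K" using that by (auto simp: K_def KK_def)
    have "PiE (UNIV::'m set) (\<lambda>_. KK T) = {f\<in>P. range f \<subseteq> KK T}"
      using sub by (auto simp: P_def PiE_def Pi_def)
    thus ?thesis using det_outer_sum[OF fin, of w] sum.inter_filter[OF finP] by simp
  qed
  have e1: "A1 = (\<Sum>p\<in>KK {0}. outer (w p))" using sT[of "{0}"] by (simp add: d1 N_def w_def)
  have e2: "A2 = (\<Sum>p\<in>KK {1}. outer (w p))" using sT[of "{1}"] by (simp add: d2 N_def w_def)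
  have e3: "A3 = (\<Sum>p\<in>KK {2}. outer (w p))" using sT[of "{2}"] by (simp add: d3 N_def w_def)
  have e12: "A1 + A2 = (\<Sum>p\<in>KK {0,1}. outer (w p))" using sT[of "{0,1}"] by (simp add: d1 d2 N_def w_def)
  have e13: "A1 + A3 = (\<Sum>p\<in>KK {0,2}. outer (w p))" using sT[of "{0,2}"] by (simp add: d1 d3 N_def w_def)
  have e23: "A2 + A3 = (\<Sum>p\<in>KK {1,2}. outer (w p))" using sT[of "{1,2}"] by (simp add: d2 d3 N_def w_def)
  have e123: "A1 + A2 + A3 = (\<Sum>p\<in>KK {0,1,2}. outer (w p))" using sT[of "{0,1,2}"]
    by (simp add: d1 d2 d3 N_def w_def add.assoc)
  define c where "c U = (if U \<subseteq> KK {0,1,2} then 1 else 0) + (if U \<subseteq> KK {0} then 1 else 0)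
    + (if U \<subseteq> KK {1} then 1 else 0) + (if U \<subseteq> KK {2} then 1 else 0)
    - (if U \<subseteq> KK {0,1} then 1 else 0) - (if U \<subseteq> KK {0,2} then 1 else 0)
    - (if U \<subseteq> KK {1,2} then 1 else (0::complex))" for U
  have diff: "det (A1 + A2 + A3) + det A1 + det A2 + det A3
           - (det (A1 + A2) + det (A1 + A3) + det (A2 + A3)) = (\<Sum>f\<in>P. c (range f) * hh w f)"
  proof -
    have ifh: "\<And>Q h. (if Q then h else 0) = (if Q then 1 else 0) * (h::complex)" by simp
    have "(\<Sum>f\<in>P. c (range f) * hh w f) =
      (\<Sum>f\<in>P. (if range f \<subseteq> KK {0,1,2} then 1 else 0) * hh w f)
      + (\<Sum>f\<in>P. (if range f \<subseteq> KK {0} then 1 else 0) * hh w f)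
      + (\<Sum>f\<in>P. (if range f \<subseteq> KK {1} then 1 else 0) * hh w f)
      + (\<Sum>f\<in>P. (if range f \<subseteq> KK {2} then 1 else 0) * hh w f)
      - (\<Sum>f\<in>P. (if range f \<subseteq> KK {0,1} then 1 else 0) * hh w f)
      - (\<Sum>f\<in>P. (if range f \<subseteq> KK {0,2} then 1 else 0) * hh w f)
      - (\<Sum>f\<in>P. (if range f \<subseteq> KK {1,2} then 1 else 0) * hh w f)"
      unfolding c_def ring_distribs sum.distrib sum_subtractf by (rule refl)
    also have "\<dots> = det (A1 + A2 + A3) + det A1 + det A2 + det A3
           - (det (A1 + A2) + det (A1 + A3) + det (A2 + A3))"
      unfolding e123 unfolding e12 e13 e23 unfolding e1 e2 e3
      by (simp add: FT ifh[symmetric])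
    finally show ?thesis by simp
  qed
  also have "\<dots> = (\<Sum>U\<in>Pow K. \<Sum>f\<in>{f. f \<in> P \<and> range f = U}. c (range f) * hh w f)"
    by (rule sum.group[symmetric]) (use finP finK in \<open>auto simp: P_def PiE_def Pi_def\<close>)
  also have "\<dots> = (\<Sum>U\<in>Pow K. c U * (\<Sum>f\<in>{f\<in>P. range f = U}. hh w f))"
    by (simp add: sum_distrib_left)
  also have "\<dots> \<ge> 0"
  proof (rule sum_nonneg)
    fix U assume U: "U \<in> Pow K"
    show "c U * (\<Sum>f\<in>{f\<in>P. range f = U}. hh w f) \<ge> 0"
    proof (cases "U = {}")
      case True
      hence "{f\<in>P. range f = U} = {}" by auto
      hence "(\<Sum>f\<in>{f\<in>P. range f = U}. hh w f) = 0" by (simp only: sum.empty)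
      thus ?thesis by simp
    next
      case False
      have key: "U \<subseteq> KK T \<longleftrightarrow> (\<forall>p\<in>U. fst p \<in> T)" if "T \<subseteq> {0,1,2}" for T
        using U that by (auto simp: K_def KK_def)
      have U3: "\<forall>p\<in>U. fst p \<in> {0,1,2}" using U by (auto simp: K_def KK_def)
      have "c U \<ge> 0" unfolding c_def using key c_nonneg[OF U3 False] by simp
      moreover have "(\<Sum>f\<in>{f\<in>P. range f = U}. hh w f) \<ge> 0"
        using sum_group_nonneg[of U K w] U unfolding P_def by simp
      ultimately show ?thesis by (rule mult_nonneg_nonneg)
    qed
  qed
  finally show ?thesis by simp
qed

end
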